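(* Let $\mathcal{A}=\sum_{i=1}^r\lambda_i u_i\otimes u_i\otimes\bar u_i\otimes\bar u_i$ be a CPS tensor with $0\neq\lambda_i\in\mathbb{R}$ and $u_i\in\mathbb{C}^n$, and let $U=\{u_1,\dots,u_r\}$. If $2k_U\ge r+2$, where $k_U$ is the Kruskal rank of $U$, then $rank_{cps}(\mathcal{A})=r$, and the CPS rank decomposition of $\mathcal{A}$ is unique up to permutation of the terms and scaling of the decomposing vectors.
   Context: A tensor $\mathcal{A}\in\mathbb{C}^{n\times n\times n\times n}$ is conjugate partial-symmetric (CPS) if $\mathcal{A}_{ijkl}=\overline{\mathcal{A}_{klij}}$ and $\mathcal{A}_{ijkl}=\mathcal{A}_{jikl}=\mathcal{A}_{ijlk}$ for all indices. The CPS rank $rank_{cps}(\mathcal{A})$ is the smallest $r$ such that $\mathcal{A}=\sum_{i=1}^r\lambda_i a_i\otimes a_i\otimes\bar a_i\otimes\bar a_i$ with $\lambda_i\in\mathbb{R}$, $a_i\in\mathbb{C}^n$; such a decomposition with $r=rank_{cps}(\mathcal{A})$ terms is a CPS rank decomposition. The Kruskal rank $k_U$ of a finite set of vectors $U$ is the largest $k$ such that every subset of $k$ vectors of $U$ is linearly independent. *)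

theory Defs
  imports "HOL-Analysis.Analysis"
begin

type_synonym 'n tensor4 = "'n \<Rightarrow> 'n \<Rightarrow> 'n \<Rightarrow> 'n \<Rightarrow> complex"

definition cps_tensor :: "'n tensor4 \<Rightarrow> bool" where
  "cps_tensor A \<longleftrightarrow> (\<forall>i j k l. A i j k l = cnj (A k l i j) \<and> A i j k l = A j i k l \<and> A i j k l = A i j l k)"

definition cps_sum :: "nat \<Rightarrow> (nat \<Rightarrow> real) \<Rightarrow> (nat \<Rightarrow> complex ^ 'n) \<Rightarrow> 'n tensor4" where
  "cps_sum r lam a = (\<lambda>i j k l. \<Sum>m<r. complex_of_real (lam m) * (a m $ i) * (a m $ j) * cnj (a m $ k) * cnj (a m $ l))"

definition rank_cps :: "('n::finite) tensor4 \<Rightarrow> nat" where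
  "rank_cps A = (LEAST r. \<exists>lam a. A = cps_sum r lam a)"

definition kruskal_rank :: "nat \<Rightarrow> (nat \<Rightarrow> complex ^ 'n) \<Rightarrow> nat" where
  "kruskal_rank r u = (GREATEST k. k \<le> r \<and>
     (\<forall>S \<subseteq> {..<r}. card S = k \<longrightarrow> inj_on u S \<and> vec.independent (u ` S)))"

end

theory Submission imports Defs begin

definition bl :: "complex^'n \<Rightarrow> complex^'n \<Rightarrow> complex" where
  "bl a x = (\<Sum>i\<in>UNIV. a$i * x$i)"

lemma bl_scale: "bl (c *s a) x = c * bl a x"
  by (simp add: bl_def sum_distrib_left mult.assoc)

lemma dual_exists:
  fixes B :: "(complex^'n) set"
  assumes "vec.independent B" "b \<in> B"
  shows "\<exists>x. bl b x = 1 \<and> (\<forall>c\<in>B. c \<noteq> b \<longrightarrow> bl c x = 0)"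
proof -
  interpret p: vector_space_pair "(*s) :: complex \<Rightarrow> complex^'n \<Rightarrow> _" "(*) :: complex \<Rightarrow> complex \<Rightarrow> complex"
    by unfold_locales (auto simp: algebra_simps vec_eq_iff)
  obtain g where g: "Vector_Spaces.linear (*s) (*) g" "\<forall>c\<in>B. g c = (if c = b then 1 else 0)"
    using p.linear_independent_extend[OF assms(1), of "\<lambda>c. if c = b then 1 else 0"] by auto
  interpret g: Vector_Spaces.linear "(*s) :: complex \<Rightarrow> complex^'n \<Rightarrow> _" "(*) :: complex \<Rightarrow> complex \<Rightarrow> complex" g by fact
  define x where "x = (\<chi> i. g (axis i 1))"
  have "bl a x = g a" for a
  proof -
    have "g a = g (\<Sum>i\<in>UNIV. (a$i) *s axis i 1)" by (simp add: basis_expansion)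
    also have "\<dots> = (\<Sum>i\<in>UNIV. a$i * g (axis i 1))" by (simp add: g.sum g.scale)
    finally show ?thesis by (simp add: bl_def x_def)
  qed
  then show ?thesis using g(2) assms(2) by (intro exI[of _ x]) auto
qed

lemma span_zero_functional:
  fixes S :: "(complex^'m) set"
  assumes "\<forall>w\<in>S. bl w a = 0" "z \<in> vec.span S"
  shows "bl z a = 0"
proof -
  interpret g: Vector_Spaces.linear "(*s) :: complex \<Rightarrow> complex^'m \<Rightarrow> _" "(*) :: complex \<Rightarrow> complex \<Rightarrow> complex" "\<lambda>w. bl w a"
    by unfold_locales (auto simp: bl_def algebra_simps sum.distrib sum_distrib_left)
  show ?thesis using g.eq_0_on_span assms by blast
qed

definition kprop :: "nat \<Rightarrow> (nat \<Rightarrow> complex ^ 'n) \<Rightarrow> nat \<Rightarrow> bool" where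
  "kprop r u k \<longleftrightarrow> (\<forall>S \<subseteq> {..<r}. card S \<le> k \<longrightarrow> inj_on u S \<and> vec.independent (u ` S))"

lemma kprop_kruskal:
  "kruskal_rank r u \<le> r \<and> kprop r u (kruskal_rank r u)"
proof -
  let ?P = "\<lambda>k. k \<le> r \<and> (\<forall>S \<subseteq> {..<r}. card S = k \<longrightarrow> inj_on u S \<and> vec.independent (u ` S))"
  have P0: "?P 0"
  proof -
    have "S \<subseteq> {..<r} \<Longrightarrow> card S = 0 \<Longrightarrow> S = {}" for S
      using finite_subset by fastforce
    then show ?thesis by (metis image_empty inj_on_empty vec.independent_empty le0)
  qed
  have Pk: "?P (kruskal_rank r u)"
    unfolding kruskal_rank_def by (rule GreatestI_nat[where P="?P", OF P0]) auto
  have "kprop r u (kruskal_rank r u)"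
    unfolding kprop_def
  proof (intro allI impI)
    fix S assume S: "S \<subseteq> {..<r}" "card S \<le> kruskal_rank r u"
    have fS: "finite S" using S finite_subset by blast
    have "card S + card ({..<r} - S) = r"
      using S card_Diff_subset[OF fS S(1)] card_mono[OF _ S(1)] by simp
    then have "kruskal_rank r u - card S \<le> card ({..<r} - S)" using Pk by linarith
    then obtain T where T: "T \<subseteq> {..<r} - S" "card T = kruskal_rank r u - card S" "finite T"
      by (rule obtain_subset_with_card_n)
    have "card (S \<union> T) = kruskal_rank r u"
      using T fS S card_Un_disjoint[OF fS T(3)] by auto
    moreover have "S \<union> T \<subseteq> {..<r}" using S T by auto
    ultimately have "inj_on u (S \<union> T) \<and> vec.independent (u ` (S \<union> T))"
      using Pk by blast
    then show "inj_on u S \<and> vec.independent (u ` S)"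
      using inj_on_subset vec.independent_mono by (metis Un_upper1 image_mono)
  qed
  then show ?thesis using Pk by simp
qed

lemma kprop_dual:
  assumes "kprop r u k" "p < r" "Z \<subseteq> {..<r}" "p \<notin> Z" "card Z + 1 \<le> k"
  shows "\<exists>x. bl (u p) x = 1 \<and> (\<forall>m\<in>Z. bl (u m) x = 0)"
proof -
  have fZ: "finite Z" using assms(3) finite_subset by blast
  have "card (insert p Z) \<le> k" using assms fZ by simp
  moreover have "insert p Z \<subseteq> {..<r}" using assms by auto
  ultimately have h: "inj_on u (insert p Z)" "vec.independent (u ` insert p Z)"
    using assms(1) unfolding kprop_def by blast+
  obtain x where x: "bl (u p) x = 1" "\<forall>c\<in>u ` insert p Z. c \<noteq> u p \<longrightarrow> bl c x = 0"
    using dual_exists[OF h(2), of "u p"] by auto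
  have "\<forall>m\<in>Z. bl (u m) x = 0"
  proof
    fix m assume "m \<in> Z"
    then have "u m \<noteq> u p" using h(1) assms(4) by (metis inj_on_contraD insertCI)
    then show "bl (u m) x = 0" using x(2) \<open>m \<in> Z\<close> by auto
  qed
  then show ?thesis using x by blast
qed

lemma split_set:
  assumes "finite Os" "card Os \<le> a + b"
  shows "\<exists>O1 O2. O1 \<subseteq> Os \<and> O2 \<subseteq> Os \<and> O1 \<union> O2 = Os \<and> card O1 \<le> a \<and> card O2 \<le> b"
proof -
  obtain O1 where O1: "O1 \<subseteq> Os" "card O1 = min a (card Os)" "finite O1"
    using obtain_subset_with_card_n[of "min a (card Os)" Os] by auto
  have "card (Os - O1) = card Os - card O1" using card_Diff_subset[OF O1(3) O1(1)] .
  then have "card (Os - O1) \<le> b" using O1 assms by auto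
  then show ?thesis using O1 by (intro exI[of _ O1] exI[of _ "Os - O1"]) auto
qed

lemma iso_pair:
  assumes "kprop r u k" "r + 1 \<le> 2 * k" "p < r"
  shows "\<exists>x y. bl (u p) x = 1 \<and> bl (u p) y = 1 \<and> (\<forall>m<r. m \<noteq> p \<longrightarrow> bl (u m) x * bl (u m) y = 0)"
proof -
  have "card ({..<r} - {p}) = r - 1" using assms by simp
  then have "card ({..<r} - {p}) \<le> (k - 1) + (k - 1)" using assms by linarith
  then obtain O1 O2 where Os: "O1 \<subseteq> {..<r} - {p}" "O2 \<subseteq> {..<r} - {p}" "O1 \<union> O2 = {..<r} - {p}"
     "card O1 \<le> k - 1" "card O2 \<le> k - 1"
    using split_set[of "{..<r} - {p}" "k - 1" "k - 1"] by blast
  have k1: "card O1 + 1 \<le> k" "card O2 + 1 \<le> k" using Os(4,5) assms(2) by linarith+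
  obtain x where x: "bl (u p) x = 1" "\<forall>m\<in>O1. bl (u m) x = 0"
    using kprop_dual[OF assms(1) assms(3), of O1] Os k1 by auto
  obtain y where y: "bl (u p) y = 1" "\<forall>m\<in>O2. bl (u m) y = 0"
    using kprop_dual[OF assms(1) assms(3), of O2] Os k1 by auto
  have "\<forall>m<r. m \<noteq> p \<longrightarrow> bl (u m) x * bl (u m) y = 0"
  proof (intro allI impI)
    fix m assume "m < r" "m \<noteq> p"
    then have "m \<in> O1 \<union> O2" using Os(3) by auto
    then show "bl (u m) x * bl (u m) y = 0" using x y by auto
  qed
  then show ?thesis using x y by blast
qed

lemma cross_pair:
  assumes "kprop r u k" "r + 2 \<le> 2 * k" "p < r" "q < r" "p \<noteq> q"
  shows "\<exists>x y x2 y1. bl (u p) x = 1 \<and> bl (u p) y1 = 1 \<and> bl (u q) y = 1 \<and> bl (u q) x2 = 1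
     \<and> (\<forall>m<r. m \<noteq> p \<longrightarrow> bl (u m) x * bl (u m) y1 = 0)
     \<and> (\<forall>m<r. m \<noteq> q \<longrightarrow> bl (u m) x2 * bl (u m) y = 0)
     \<and> (\<forall>m<r. bl (u m) x * bl (u m) y = 0)"
proof -
  have "card ({..<r} - {p, q}) = r - 2" using assms by (simp add: card_Diff_subset)
  then have "card ({..<r} - {p, q}) \<le> (k - 2) + (k - 2)" using assms by linarith
  then obtain O1 O2 where Os: "O1 \<subseteq> {..<r} - {p,q}" "O2 \<subseteq> {..<r} - {p,q}" "O1 \<union> O2 = {..<r} - {p,q}"
     "card O1 \<le> k - 2" "card O2 \<le> k - 2"
    using split_set[of "{..<r} - {p,q}" "k - 2" "k - 2"] by blast
  have f1: "finite O1" "finite O2" using Os by (meson finite_Diff finite_lessThan finite_subset)+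
  have r2: "r \<ge> 2" using assms(3-5) by arith
  have "card (insert q O1) \<le> card O1 + 1" "card (insert p O2) \<le> card O2 + 1"
    using f1 by (simp_all add: card_insert_if)
  then have c1: "card (insert q O1) + 1 \<le> k" and c2: "card (insert p O2) + 1 \<le> k"
    using Os(4,5) assms(2) r2 by linarith+
  have c3: "card O1 + 1 \<le> k" "card O2 + 1 \<le> k" using Os(4,5) assms(2) r2 by linarith+
  obtain x where x: "bl (u p) x = 1" "\<forall>m\<in>insert q O1. bl (u m) x = 0"
    using kprop_dual[OF assms(1) assms(3), of "insert q O1"] Os assms c1 by auto
  obtain y where y: "bl (u q) y = 1" "\<forall>m\<in>insert p O2. bl (u m) y = 0"
    using kprop_dual[OF assms(1) assms(4), of "insert p O2"] Os assms c2 by auto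
  obtain y1 where y1: "bl (u p) y1 = 1" "\<forall>m\<in>O2. bl (u m) y1 = 0"
    using kprop_dual[OF assms(1) assms(3), of O2] Os c3 by auto
  obtain x2 where x2: "bl (u q) x2 = 1" "\<forall>m\<in>O1. bl (u m) x2 = 0"
    using kprop_dual[OF assms(1) assms(4), of O1] Os c3 by auto
  have m: "m = p \<or> m = q \<or> m \<in> O1 \<or> m \<in> O2" if "m < r" for m
    using Os(3) that by auto
  have a1: "\<forall>m<r. m \<noteq> p \<longrightarrow> bl (u m) x * bl (u m) y1 = 0"
  proof (intro allI impI)
    fix m assume "m < r" "m \<noteq> p"
    then consider "m = q" | "m \<in> O1" | "m \<in> O2" using m by blast
    then show "bl (u m) x * bl (u m) y1 = 0" using x y1 by cases auto
  qed
  have a2: "\<forall>m<r. m \<noteq> q \<longrightarrow> bl (u m) x2 * bl (u m) y = 0"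
  proof (intro allI impI)
    fix m assume "m < r" "m \<noteq> q"
    then consider "m = p" | "m \<in> O1" | "m \<in> O2" using m by blast
    then show "bl (u m) x2 * bl (u m) y = 0" using x2 y by cases auto
  qed
  have a3: "\<forall>m<r. bl (u m) x * bl (u m) y = 0"
  proof (intro allI impI)
    fix m assume "m < r"
    then consider "m = p" | "m = q" | "m \<in> O1" | "m \<in> O2" using m by blast
    then show "bl (u m) x * bl (u m) y = 0" using x y by cases auto
  qed
  show ?thesis
    apply (rule exI[of _ x], rule exI[of _ y], rule exI[of _ x2], rule exI[of _ y1])
    using x y x2 y1 a1 a2 a3 by auto
qed

definition W :: "(nat \<Rightarrow> complex^'n) \<Rightarrow> nat \<Rightarrow> complex^('n\<times>'n)" where
  "W v m = (\<chi> kl. cnj (v m $ fst kl) * cnj (v m $ snd kl))"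

lemma contr2_comp:
  "(\<Sum>i\<in>UNIV. \<Sum>j\<in>UNIV. x$i * y$j * cps_sum t mu v i j k l)
   = (\<Sum>m<t. of_real (mu m) * bl (v m) x * bl (v m) y * (cnj (v m $ k) * cnj (v m $ l)))"
proof -
  have "(\<Sum>i\<in>UNIV. \<Sum>j\<in>UNIV. x$i * y$j * cps_sum t mu v i j k l)
     = (\<Sum>i\<in>UNIV. \<Sum>j\<in>UNIV. \<Sum>m<t. x$i * y$j * (of_real (mu m) * v m $ i * v m $ j * cnj (v m $ k) * cnj (v m $ l)))"
    by (simp add: cps_sum_def sum_distrib_left)
  also have "\<dots> = (\<Sum>i\<in>UNIV. \<Sum>m<t. \<Sum>j\<in>UNIV. x$i * y$j * (of_real (mu m) * v m $ i * v m $ j * cnj (v m $ k) * cnj (v m $ l)))"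
    by (rule sum.cong[OF refl], rule sum.swap)
  also have "\<dots> = (\<Sum>m<t. \<Sum>i\<in>UNIV. \<Sum>j\<in>UNIV. x$i * y$j * (of_real (mu m) * v m $ i * v m $ j * cnj (v m $ k) * cnj (v m $ l)))"
    by (rule sum.swap)
  also have "\<dots> = (\<Sum>m<t. of_real (mu m) * bl (v m) x * bl (v m) y * (cnj (v m $ k) * cnj (v m $ l)))"
    by (rule sum.cong[OF refl]) (simp add: bl_def sum_distrib_left sum_distrib_right algebra_simps)
  finally show ?thesis .
qed

lemma contr2:
  "(\<chi> kl. \<Sum>i\<in>UNIV. \<Sum>j\<in>UNIV. x$i * y$j * cps_sum t mu v i j (fst kl) (snd kl))
   = (\<Sum>m<t. (of_real (mu m) * bl (v m) x * bl (v m) y) *s W v m)"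
proof (subst vec_eq_iff, intro allI)
  fix kl :: "'a \<times> 'a"
  show "(\<chi> kl. \<Sum>i\<in>UNIV. \<Sum>j\<in>UNIV. x$i * y$j * cps_sum t mu v i j (fst kl) (snd kl)) $ kl
   = (\<Sum>m<t. (of_real (mu m) * bl (v m) x * bl (v m) y) *s W v m) $ kl"
    by (cases kl) (simp add: sum_component W_def contr2_comp)
qed

lemma contr4:
  "(\<Sum>k\<in>UNIV. \<Sum>l\<in>UNIV. cnj (x$k) * cnj (y$l) * (\<Sum>i\<in>UNIV. \<Sum>j\<in>UNIV. x$i * y$j * cps_sum t mu v i j k l))
   = (\<Sum>m<t. of_real (mu m) * (bl (v m) x * bl (v m) y) * cnj (bl (v m) x * bl (v m) y))"
proof -
  have "(\<Sum>k\<in>UNIV. \<Sum>l\<in>UNIV. cnj (x$k) * cnj (y$l) * (\<Sum>i\<in>UNIV. \<Sum>j\<in>UNIV. x$i * y$j * cps_sum t mu v i j k l))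
    = (\<Sum>k\<in>UNIV. \<Sum>l\<in>UNIV. \<Sum>m<t. cnj (x$k) * cnj (y$l) * (of_real (mu m) * bl (v m) x * bl (v m) y * (cnj (v m $ k) * cnj (v m $ l))))"
    by (simp add: contr2_comp sum_distrib_left)
  also have "\<dots> = (\<Sum>k\<in>UNIV. \<Sum>m<t. \<Sum>l\<in>UNIV. cnj (x$k) * cnj (y$l) * (of_real (mu m) * bl (v m) x * bl (v m) y * (cnj (v m $ k) * cnj (v m $ l))))"
    by (rule sum.cong[OF refl], rule sum.swap)
  also have "\<dots> = (\<Sum>m<t. \<Sum>k\<in>UNIV. \<Sum>l\<in>UNIV. cnj (x$k) * cnj (y$l) * (of_real (mu m) * bl (v m) x * bl (v m) y * (cnj (v m $ k) * cnj (v m $ l))))"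
    by (rule sum.swap)
  also have "\<dots> = (\<Sum>m<t. of_real (mu m) * (bl (v m) x * bl (v m) y) * cnj (bl (v m) x * bl (v m) y))"
  proof (rule sum.cong[OF refl])
    fix m
    let ?C = "of_real (mu m) * bl (v m) x * bl (v m) y"
    have e: "cnj (bl (v m) x * bl (v m) y) = (\<Sum>k\<in>UNIV. \<Sum>l\<in>UNIV. cnj (v m $ k) * cnj (x$k) * (cnj (v m $ l) * cnj (y$l)))"
      by (simp add: bl_def sum_product)
    show "(\<Sum>k\<in>UNIV. \<Sum>l\<in>UNIV. cnj (x$k) * cnj (y$l) * (?C * (cnj (v m $ k) * cnj (v m $ l))))
        = of_real (mu m) * (bl (v m) x * bl (v m) y) * cnj (bl (v m) x * bl (v m) y)"
      unfolding e sum_distrib_left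
      by (rule sum.cong[OF refl], rule sum.cong[OF refl]) (simp add: algebra_simps)
  qed
  finally show ?thesis .
qed

lemma cps_is_cps: "cps_tensor (cps_sum r lam u)"
  unfolding cps_tensor_def cps_sum_def
  by (auto simp: algebra_simps)

lemma sum_iso:
  fixes r :: nat
  assumes "p < r" "\<forall>m<r. m \<noteq> p \<longrightarrow> f m = 0"
  shows "sum f {..<r} = f p"
proof -
  have "sum f {..<r} = f p + sum f ({..<r} - {p})"
    using assms(1) by (intro sum.remove) auto
  also have "sum f ({..<r} - {p}) = 0" using assms(2) by (intro sum.neutral) auto
  finally show ?thesis by simp
qed

lemma bl_W:
  "bl (W v m) (\<chi> kl. cnj (x$fst kl) * cnj (y$snd kl)) = cnj (bl (v m) x * bl (v m) y)"
proof -
  have "bl (W v m) (\<chi> kl. cnj (x$fst kl) * cnj (y$snd kl))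
      = (\<Sum>kl\<in>UNIV \<times> UNIV. cnj (v m $ fst kl) * cnj (v m $ snd kl) * (cnj (x$fst kl) * cnj (y$snd kl)))"
    by (simp add: bl_def W_def UNIV_Times_UNIV)
  also have "\<dots> = (\<Sum>k\<in>UNIV. \<Sum>l\<in>UNIV. cnj (v m $ k) * cnj (v m $ l) * (cnj (x$k) * cnj (y$l)))"
    by (simp add: sum.cartesian_product case_prod_beta)
  also have "\<dots> = cnj (bl (v m) x * bl (v m) y)"
    by (simp add: bl_def sum_product algebra_simps)
  finally show ?thesis .
qed

lemma W_indep:
  assumes "kprop r u k" "r + 1 \<le> 2 * k"
  shows "vec.independent (W u ` {..<r}) \<and> inj_on (W u) {..<r}"
proof -
  have phi: "\<exists>z. \<forall>m<r. bl (W u m) z = (if m = p then 1 else 0)" if pr: "p < r" for p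
  proof -
    obtain x y where xy: "bl (u p) x = 1" "bl (u p) y = 1" "\<forall>m<r. m \<noteq> p \<longrightarrow> bl (u m) x * bl (u m) y = 0"
      using iso_pair[OF assms pr] by blast
    show ?thesis using xy by (intro exI[of _ "\<chi> kl. cnj (x$fst kl) * cnj (y$snd kl)"]) (auto simp: bl_W)
  qed
  have inj: "inj_on (W u) {..<r}"
  proof (rule inj_onI)
    fix p q assume pq: "p \<in> {..<r}" "q \<in> {..<r}" "W u p = W u q"
    show "p = q"
    proof (rule ccontr)
      assume "p \<noteq> q"
      obtain z where "\<forall>m<r. bl (W u m) z = (if m = p then 1 else 0)" using phi pq by auto
      then show False using pq \<open>p \<noteq> q\<close> by (metis lessThan_iff one_neq_zero)
    qed
  qed
  have "\<not> vec.dependent (W u ` {..<r})"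
  proof
    assume "vec.dependent (W u ` {..<r})"
    then obtain p where p: "p < r" "W u p \<in> vec.span (W u ` {..<r} - {W u p})"
      unfolding vec.dependent_def by auto
    obtain z where z: "\<forall>m<r. bl (W u m) z = (if m = p then 1 else 0)" using phi p by auto
    have "\<forall>w\<in>W u ` {..<r} - {W u p}. bl w z = 0"
    proof
      fix w assume "w \<in> W u ` {..<r} - {W u p}"
      then obtain m where m: "m < r" "w = W u m" "W u m \<noteq> W u p" by auto
      then have "m \<noteq> p" by auto
      then show "bl w z = 0" using z m by simp
    qed
    then have "bl (W u p) z = 0" using span_zero_functional p(2) by blast
    then show False using z p by simp
  qed
  then show ?thesis using inj by simp
qed

lemma W_zero: "v m = 0 \<Longrightarrow> W v m = 0"
  by (simp add: W_def vec_eq_iff)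

lemma lower_bound:
  assumes "kprop r u k" "r + 1 \<le> 2 * k" "\<forall>i<r. lam i \<noteq> 0"
    and eq: "cps_sum t mu v = cps_sum r lam u"
  shows "W u ` {..<r} \<subseteq> vec.span (W v ` {j. j < t \<and> mu j \<noteq> 0 \<and> v j \<noteq> 0})"
    and "r \<le> card {j. j < t \<and> mu j \<noteq> 0 \<and> v j \<noteq> 0}"
proof -
  let ?J = "{j. j < t \<and> mu j \<noteq> 0 \<and> v j \<noteq> 0}"
  show sp: "W u ` {..<r} \<subseteq> vec.span (W v ` ?J)"
  proof
    fix w assume "w \<in> W u ` {..<r}"
    then obtain p where p: "p < r" "w = W u p" by auto
    obtain x y where xy: "bl (u p) x = 1" "bl (u p) y = 1" "\<forall>m<r. m \<noteq> p \<longrightarrow> bl (u m) x * bl (u m) y = 0"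
      using iso_pair[OF assms(1,2) p(1)] by blast
    have "(\<Sum>m<r. (of_real (lam m) * bl (u m) x * bl (u m) y) *s W u m) = (of_real (lam p) * bl (u p) x * bl (u p) y) *s W u p"
      by (rule sum_iso[OF p(1)]) (use xy in \<open>auto simp: mult.assoc\<close>)
    also have "\<dots> = of_real (lam p) *s W u p" using xy by simp
    finally have e1: "of_real (lam p) *s W u p = (\<Sum>m<t. (of_real (mu m) * bl (v m) x * bl (v m) y) *s W v m)"
      using contr2[of x y t mu v] contr2[of x y r lam u] eq by simp
    have "(\<Sum>m<t. (of_real (mu m) * bl (v m) x * bl (v m) y) *s W v m) = (\<Sum>m\<in>?J. (of_real (mu m) * bl (v m) x * bl (v m) y) *s W v m)"
      by (rule sum.mono_neutral_right) (auto simp: W_zero)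
    also have "\<dots> \<in> vec.span (W v ` ?J)"
      by (intro vec.span_sum vec.span_scale vec.span_base) auto
    finally have "of_real (lam p) *s W u p \<in> vec.span (W v ` ?J)" using e1 by simp
    then have "inverse (of_real (lam p)) *s (of_real (lam p) *s W u p) \<in> vec.span (W v ` ?J)"
      by (rule vec.span_scale)
    then show "w \<in> vec.span (W v ` ?J)" using p assms(3) by simp
  qed
  have fJ: "finite ?J" by auto
  have ind: "vec.independent (W u ` {..<r})" "inj_on (W u) {..<r}" using W_indep[OF assms(1,2)] by auto
  have "card (W u ` {..<r}) \<le> card (W v ` ?J)"
    using vec.independent_span_bound[OF _ ind(1) sp] fJ by auto
  also have "\<dots> \<le> card ?J" by (rule card_image_le[OF fJ])
  finally show "r \<le> card ?J" using card_image[OF ind(2)] by simp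
qed

lemma bl_pair_expand:
  assumes "\<forall>k l. w$k * w$l = (\<Sum>p<r. b p * (u p $ k * u p $ l))"
  shows "bl w x * bl w y = (\<Sum>p<r. b p * (bl (u p) x * bl (u p) y))"
proof -
  have "bl w x * bl w y = (\<Sum>k\<in>UNIV. \<Sum>l\<in>UNIV. x$k * y$l * (w$k * w$l))"
    by (simp add: bl_def sum_product algebra_simps)
  also have "\<dots> = (\<Sum>k\<in>UNIV. \<Sum>l\<in>UNIV. \<Sum>p<r. x$k * y$l * (b p * (u p $ k * u p $ l)))"
    using assms by (simp add: sum_distrib_left)
  also have "\<dots> = (\<Sum>k\<in>UNIV. \<Sum>p<r. \<Sum>l\<in>UNIV. x$k * y$l * (b p * (u p $ k * u p $ l)))"
    by (rule sum.cong[OF refl], rule sum.swap)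
  also have "\<dots> = (\<Sum>p<r. \<Sum>k\<in>UNIV. \<Sum>l\<in>UNIV. x$k * y$l * (b p * (u p $ k * u p $ l)))"
    by (rule sum.swap)
  also have "\<dots> = (\<Sum>p<r. b p * (bl (u p) x * bl (u p) y))"
  proof (rule sum.cong[OF refl])
    fix p
    have e: "bl (u p) x * bl (u p) y = (\<Sum>k\<in>UNIV. \<Sum>l\<in>UNIV. u p $ k * x $ k * (u p $ l * y $ l))"
      by (simp add: bl_def sum_product)
    show "(\<Sum>k\<in>UNIV. \<Sum>l\<in>UNIV. x$k * y$l * (b p * (u p $ k * u p $ l))) = b p * (bl (u p) x * bl (u p) y)"
      unfolding e sum_distrib_left
      by (rule sum.cong[OF refl], rule sum.cong[OF refl]) (simp add: algebra_simps)
  qed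
  finally show ?thesis .
qed

lemma rank_one:
  assumes "kprop r u k" "r + 2 \<le> 2 * k"
    and eqw: "\<forall>k l. w$k * w$l = (\<Sum>p<r. b p * (u p $ k * u p $ l))"
    and wnz: "w \<noteq> 0"
  shows "\<exists>p<r. \<exists>c. c \<noteq> 0 \<and> w = c *s u p"
proof -
  have B: "bl w x * bl w y = (\<Sum>p<r. b p * (bl (u p) x * bl (u p) y))" for x y
    by (rule bl_pair_expand[OF eqw])
  have pair0: "b p * b q = 0" if pq: "p < r" "q < r" "p \<noteq> q" for p q
  proof -
    obtain x y x2 y1 where h: "bl (u p) x = 1" "bl (u p) y1 = 1" "bl (u q) y = 1" "bl (u q) x2 = 1"
      "\<forall>m<r. m \<noteq> p \<longrightarrow> bl (u m) x * bl (u m) y1 = 0"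
      "\<forall>m<r. m \<noteq> q \<longrightarrow> bl (u m) x2 * bl (u m) y = 0"
      "\<forall>m<r. bl (u m) x * bl (u m) y = 0"
      using cross_pair[OF assms(1,2) pq] by blast
    have e1: "bl w x * bl w y1 = b p"
      unfolding B by (subst sum_iso[OF pq(1)]) (use h in auto)
    have e2: "bl w x2 * bl w y = b q"
      unfolding B by (subst sum_iso[OF pq(2)]) (use h in auto)
    have e3: "bl w x * bl w y = 0"
      unfolding B using h(7) by (intro sum.neutral) auto
    have "(bl w x * bl w y1) * (bl w x2 * bl w y) = (bl w x * bl w y) * (bl w x2 * bl w y1)"
      by (simp add: algebra_simps)
    then show ?thesis using e1 e2 e3 by simp
  qed
  obtain k0 where k0: "w $ k0 \<noteq> 0" using wnz by (metis vec_eq_iff zero_index)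
  have "(\<Sum>p<r. b p * (u p $ k0 * u p $ k0)) \<noteq> 0" using eqw k0 by (metis mult_eq_0_iff)
  then obtain p where p: "p < r" "b p \<noteq> 0"
    by (metis (no_types, lifting) lessThan_iff mult_eq_0_iff sum.neutral)
  have bq: "b q = 0" if "q < r" "q \<noteq> p" for q
    using pair0[OF p(1) that(1)] that p by auto
  have ew: "w$k * w$l = b p * (u p $ k * u p $ l)" for k l
    using eqw bq by (subst (asm) sum_iso[OF p(1)]) auto
  define c where "c = b p * u p $ k0 / w $ k0"
  have "w = c *s u p"
  proof (subst vec_eq_iff, intro allI)
    fix l
    have "w $ l = w$k0 * w$l / w$k0" using k0 by simp
    also have "\<dots> = c * u p $ l" using ew[of k0 l] by (simp add: c_def algebra_simps)
    finally show "w $ l = (c *s u p) $ l" by simp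
  qed
  moreover have "c \<noteq> 0" using wnz calculation by auto
  ultimately show ?thesis using p by blast
qed

lemma cnorm4: "c * c * cnj (c * c) = complex_of_real (cmod c ^ 4)"
proof -
  have "c * c * cnj (c * c) = (c * cnj c) * (c * cnj c)" by (simp add: algebra_simps)
  also have "\<dots> = complex_of_real (cmod c ^ 2) * complex_of_real (cmod c ^ 2)"
    by (simp only: complex_norm_square)
  also have "\<dots> = complex_of_real (cmod c ^ 2 * cmod c ^ 2)"
    by (simp only: of_real_mult)
  also have "cmod c ^ 2 * cmod c ^ 2 = cmod c ^ 4"
    by (simp flip: power_add)
  finally show ?thesis .
qed

lemma bl_scale2: "bl (c *s a) x * bl (c *s a) y = c * c * (bl a x * bl a y)"
  by (simp add: bl_scale algebra_simps)

theorem proposition3p2: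
  fixes r :: nat and lam :: "nat \<Rightarrow> real" and u :: "nat \<Rightarrow> complex ^ 'n"
  assumes lam_nz: "\<forall>i<r. lam i \<noteq> 0"
    and kr: "2 * kruskal_rank r u \<ge> r + 2"
  shows "cps_tensor (cps_sum r lam u)
     \<and> rank_cps (cps_sum r lam u) = r
     \<and> (\<forall>(mu :: nat \<Rightarrow> real) (v :: nat \<Rightarrow> complex ^ 'n).
          cps_sum r mu v = cps_sum r lam u \<longrightarrow>
          (\<exists>\<sigma> c. \<sigma> permutes {..<r} \<and>
             (\<forall>i<r. c i \<noteq> 0 \<and> v (\<sigma> i) = c i *s u i
                    \<and> mu (\<sigma> i) * (cmod (c i)) ^ 4 = lam i)))"
proof -
  define k where "k = kruskal_rank r u"
  have K: "k \<le> r" "kprop r u k" using kprop_kruskal k_def by auto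
  have k2: "r + 2 \<le> 2 * k" using kr k_def by simp
  have k1: "r + 1 \<le> 2 * k" using k2 by simp
  have rank: "rank_cps (cps_sum r lam u) = r"
    unfolding rank_cps_def
  proof (rule Least_equality)
    show "\<exists>lam' a. cps_sum r lam u = cps_sum r lam' a" by blast
    fix t assume "\<exists>lam' a. cps_sum r lam u = cps_sum t lam' a"
    then obtain mu v where eq: "cps_sum t mu v = cps_sum r lam u" by metis
    have "r \<le> card {j. j < t \<and> mu j \<noteq> 0 \<and> v j \<noteq> 0}"
      using lower_bound(2)[OF K(2) k1 lam_nz eq] .
    also have "\<dots> \<le> card {..<t}" by (rule card_mono) auto
    finally show "r \<le> t" by simp
  qed
  have uniq: "\<forall>(mu :: nat \<Rightarrow> real) (v :: nat \<Rightarrow> complex ^ 'n).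
          cps_sum r mu v = cps_sum r lam u \<longrightarrow>
          (\<exists>\<sigma> c. \<sigma> permutes {..<r} \<and>
             (\<forall>i<r. c i \<noteq> 0 \<and> v (\<sigma> i) = c i *s u i
                    \<and> mu (\<sigma> i) * (cmod (c i)) ^ 4 = lam i))"
  proof (intro allI impI)
    fix mu :: "nat \<Rightarrow> real" and v :: "nat \<Rightarrow> complex ^ 'n"
    assume eq: "cps_sum r mu v = cps_sum r lam u"
    let ?J = "{j. j < r \<and> mu j \<noteq> 0 \<and> v j \<noteq> 0}"
    have lb: "W u ` {..<r} \<subseteq> vec.span (W v ` ?J)" "r \<le> card ?J"
      using lower_bound[OF K(2) k1 lam_nz eq] by auto
    have sub: "?J \<subseteq> {..<r}" by auto
    have "card ?J \<le> r" using card_mono[OF _ sub] by simp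
    then have J: "?J = {..<r}" using card_subset_eq[OF finite_lessThan sub] lb(2) by simp
    have nz: "mu j \<noteq> 0 \<and> v j \<noteq> 0" if "j < r" for j
    proof -
      have "j \<in> ?J" using J that by simp
      then show ?thesis by simp
    qed
    have sp: "W u ` {..<r} \<subseteq> vec.span (W v ` {..<r})" using lb(1) J by simp
    have ind: "vec.independent (W u ` {..<r})" "inj_on (W u) {..<r}" using W_indep[OF K(2) k1] by auto
    have inspan: "W v j \<in> vec.span (W u ` {..<r})" if "j < r" for j
    proof (rule ccontr)
      assume nin: "W v j \<notin> vec.span (W u ` {..<r})"
      then have nin2: "W v j \<notin> W u ` {..<r}" using vec.span_base[of "W v j" "W u ` {..<r}"] by argo
      have "W v j \<in> vec.span (W v ` {..<r})" using that by (intro vec.span_base) simp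
      then have sub2: "insert (W v j) (W u ` {..<r}) \<subseteq> vec.span (W v ` {..<r})"
        using sp by (simp only: insert_subset)
      have "vec.independent (insert (W v j) (W u ` {..<r}))" using vec.independent_insertI[OF nin ind(1)] .
      from this sub2 have "card (insert (W v j) (W u ` {..<r})) \<le> card (W v ` {..<r})"
        using vec.independent_span_bound[of "W v ` {..<r}"] by simp
      also have "\<dots> \<le> r" using card_image_le[of "{..<r}" "W v"] by simp
      finally have "card (insert (W v j) (W u ` {..<r})) \<le> r" .
      moreover have "card (insert (W v j) (W u ` {..<r})) = r + 1"
        using nin2 card_image[OF ind(2)] by simp
      ultimately show False by simp
    qed
    have par: "\<exists>p<r. \<exists>c. c \<noteq> 0 \<and> v j = c *s u p" if jr: "j < r" for j
    proof -
      obtain g where g: "W v j = (\<Sum>w\<in>W u ` {..<r}. g w *s w)"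
        using inspan[OF jr] vec.span_finite[of "W u ` {..<r}"] by auto
      then have g2: "W v j = (\<Sum>p<r. g (W u p) *s W u p)"
        using sum.reindex[OF ind(2), of "\<lambda>w. g w *s w"] by (simp add: comp_def)
      have "\<forall>k l. v j $ k * v j $ l = (\<Sum>p<r. cnj (g (W u p)) * (u p $ k * u p $ l))"
      proof (intro allI)
        fix k l
        have "(W v j) $ (k,l) = (\<Sum>p<r. g (W u p) * (cnj (u p $ k) * cnj (u p $ l)))"
          using g2 by (simp add: sum_component W_def)
        then have "cnj (v j $ k) * cnj (v j $ l) = (\<Sum>p<r. g (W u p) * (cnj (u p $ k) * cnj (u p $ l)))"
          by (simp add: W_def)
        then have "cnj (cnj (v j $ k) * cnj (v j $ l)) = cnj (\<Sum>p<r. g (W u p) * (cnj (u p $ k) * cnj (u p $ l)))"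
          by simp
        then show "v j $ k * v j $ l = (\<Sum>p<r. cnj (g (W u p)) * (u p $ k * u p $ l))" by simp
      qed
      from rank_one[OF K(2) k2 this] nz[OF jr] show ?thesis by simp
    qed
    have "\<forall>j. \<exists>pc. j < r \<longrightarrow> fst pc < r \<and> snd pc \<noteq> 0 \<and> v j = snd pc *s u (fst pc)"
    proof
      fix j show "\<exists>pc. j < r \<longrightarrow> fst pc < r \<and> snd pc \<noteq> 0 \<and> v j = snd pc *s u (fst pc)"
      proof (cases "j < r")
        case True
        then obtain p cc where "p < r" "cc \<noteq> 0" "v j = cc *s u p" using par by blast
        then show ?thesis by (intro exI[of _ "(p, cc)"]) simp
      qed simp
    qed
    from choice[OF this] obtain f where f: "\<forall>j. j < r \<longrightarrow> fst (f j) < r \<and> snd (f j) \<noteq> 0 \<and> v j = snd (f j) *s u (fst (f j))"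
      by blast
    define \<pi> where "\<pi> = (\<lambda>j. fst (f j))"
    define c where "c = (\<lambda>j. snd (f j))"
    have pc: "\<pi> j < r \<and> c j \<noteq> 0 \<and> v j = c j *s u (\<pi> j)" if "j < r" for j
      using f that by (simp add: \<pi>_def c_def)
    have contr_eq: "of_real (lam p) = (\<Sum>j<r. of_real (mu j) * (c j * c j * cnj (c j * c j)) *
         ((bl (u (\<pi> j)) x * bl (u (\<pi> j)) y) * cnj (bl (u (\<pi> j)) x * bl (u (\<pi> j)) y)))"
      if pr: "p < r" and xy: "bl (u p) x = 1" "bl (u p) y = 1" "\<forall>m<r. m \<noteq> p \<longrightarrow> bl (u m) x * bl (u m) y = 0"
      for p x y
    proof -
      have "(\<Sum>m<r. of_real (lam m) * (bl (u m) x * bl (u m) y) * cnj (bl (u m) x * bl (u m) y)) = of_real (lam p)"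
        by (subst sum_iso[OF pr]) (use xy in auto)
      also have "(\<Sum>m<r. of_real (lam m) * (bl (u m) x * bl (u m) y) * cnj (bl (u m) x * bl (u m) y))
         = (\<Sum>j<r. of_real (mu j) * (bl (v j) x * bl (v j) y) * cnj (bl (v j) x * bl (v j) y))"
        using contr4[of x y r lam u] contr4[of x y r mu v] eq by simp
      also have "\<dots> = (\<Sum>j<r. of_real (mu j) * (c j * c j * cnj (c j * c j)) *
         ((bl (u (\<pi> j)) x * bl (u (\<pi> j)) y) * cnj (bl (u (\<pi> j)) x * bl (u (\<pi> j)) y)))"
      proof (rule sum.cong[OF refl])
        fix j assume "j \<in> {..<r}"
        then have "v j = c j *s u (\<pi> j)" using pc by auto
        then have e: "bl (v j) x * bl (v j) y = c j * c j * (bl (u (\<pi> j)) x * bl (u (\<pi> j)) y)"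
          by (simp only: bl_scale2)
        show "of_real (mu j) * (bl (v j) x * bl (v j) y) * cnj (bl (v j) x * bl (v j) y)
           = of_real (mu j) * (c j * c j * cnj (c j * c j)) *
         ((bl (u (\<pi> j)) x * bl (u (\<pi> j)) y) * cnj (bl (u (\<pi> j)) x * bl (u (\<pi> j)) y))"
          unfolding e complex_cnj_mult by (simp only: ac_simps)
      qed
      finally show ?thesis by simp
    qed
    have surj: "\<exists>j<r. \<pi> j = p" if pr: "p < r" for p
    proof (rule ccontr)
      assume nj: "\<not> (\<exists>j<r. \<pi> j = p)"
      obtain x y where xy: "bl (u p) x = 1" "bl (u p) y = 1" "\<forall>m<r. m \<noteq> p \<longrightarrow> bl (u m) x * bl (u m) y = 0"
        using iso_pair[OF K(2) k1 pr] by blast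
      have "(\<Sum>j<r. of_real (mu j) * (c j * c j * cnj (c j * c j)) *
         ((bl (u (\<pi> j)) x * bl (u (\<pi> j)) y) * cnj (bl (u (\<pi> j)) x * bl (u (\<pi> j)) y))) = 0"
      proof (rule sum.neutral, intro ballI)
        fix j assume "j \<in> {..<r}"
        then have "\<pi> j < r" "\<pi> j \<noteq> p" using pc nj by auto
        then show "of_real (mu j) * (c j * c j * cnj (c j * c j)) *
         ((bl (u (\<pi> j)) x * bl (u (\<pi> j)) y) * cnj (bl (u (\<pi> j)) x * bl (u (\<pi> j)) y)) = 0"
          using xy(3) by simp
      qed
      then show False using contr_eq[OF pr xy] lam_nz pr by simp
    qed
    have img: "\<pi> ` {..<r} = {..<r}"
    proof
      show "\<pi> ` {..<r} \<subseteq> {..<r}" using pc by auto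
      show "{..<r} \<subseteq> \<pi> ` {..<r}"
      proof
        fix p assume "p \<in> {..<r}"
        then obtain j where "j < r" "\<pi> j = p" using surj by auto
        then show "p \<in> \<pi> ` {..<r}" by auto
      qed
    qed
    have injp: "inj_on \<pi> {..<r}" by (rule eq_card_imp_inj_on) (simp_all add: img)
    have bijp: "bij_betw \<pi> {..<r} {..<r}" using injp img by (simp add: bij_betw_def)
    define \<sigma> where "\<sigma> = (\<lambda>i. if i < r then inv_into {..<r} \<pi> i else i)"
    have "bij_betw \<sigma> {..<r} {..<r} = bij_betw (inv_into {..<r} \<pi>) {..<r} {..<r}"
      by (rule bij_betw_cong) (simp add: \<sigma>_def)
    then have bij: "bij_betw \<sigma> {..<r} {..<r}" using bij_betw_inv_into[OF bijp] by simp
    have perm: "\<sigma> permutes {..<r}" by (rule bij_imp_permutes[OF bij]) (simp add: \<sigma>_def)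
    have sr: "\<sigma> i < r" "\<pi> (\<sigma> i) = i" if "i < r" for i
      using that img inv_into_into[of i \<pi> "{..<r}"] f_inv_into_f[of i \<pi> "{..<r}"]
      by (auto simp: \<sigma>_def)
    have sp2: "j = \<sigma> i" if "j < r" "\<pi> j = i" for i j
      using that injp pc[OF that(1)] by (auto simp: \<sigma>_def inv_into_f_f)
    have final: "c (\<sigma> i) \<noteq> 0 \<and> v (\<sigma> i) = c (\<sigma> i) *s u i \<and> mu (\<sigma> i) * (cmod (c (\<sigma> i))) ^ 4 = lam i"
      if ir: "i < r" for i
    proof -
      have h1: "c (\<sigma> i) \<noteq> 0 \<and> v (\<sigma> i) = c (\<sigma> i) *s u i" using pc[OF sr(1)[OF ir]] sr(2)[OF ir] by simp
      obtain x y where xy: "bl (u i) x = 1" "bl (u i) y = 1" "\<forall>m<r. m \<noteq> i \<longrightarrow> bl (u m) x * bl (u m) y = 0"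
        using iso_pair[OF K(2) k1 ir] by blast
      have "of_real (lam i) = (\<Sum>j<r. of_real (mu j) * (c j * c j * cnj (c j * c j)) *
         ((bl (u (\<pi> j)) x * bl (u (\<pi> j)) y) * cnj (bl (u (\<pi> j)) x * bl (u (\<pi> j)) y)))"
        using contr_eq[OF ir xy] .
      also have "\<dots> = of_real (mu (\<sigma> i)) * (c (\<sigma> i) * c (\<sigma> i) * cnj (c (\<sigma> i) * c (\<sigma> i)))"
      proof (subst sum_iso[OF sr(1)[OF ir]])
        show "\<forall>m<r. m \<noteq> \<sigma> i \<longrightarrow> of_real (mu m) * (c m * c m * cnj (c m * c m)) *
         ((bl (u (\<pi> m)) x * bl (u (\<pi> m)) y) * cnj (bl (u (\<pi> m)) x * bl (u (\<pi> m)) y)) = 0"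
        proof (intro allI impI)
          fix m assume m: "m < r" "m \<noteq> \<sigma> i"
          then have "\<pi> m \<noteq> i" using sp2 by blast
          moreover have "\<pi> m < r" using pc m by auto
          ultimately show "of_real (mu m) * (c m * c m * cnj (c m * c m)) *
            ((bl (u (\<pi> m)) x * bl (u (\<pi> m)) y) * cnj (bl (u (\<pi> m)) x * bl (u (\<pi> m)) y)) = 0"
            using xy(3) by simp
        qed
      qed (use xy sr[OF ir] in simp)
      also have "\<dots> = of_real (mu (\<sigma> i) * cmod (c (\<sigma> i)) ^ 4)" by (simp only: cnorm4 of_real_mult)
      finally have "lam i = mu (\<sigma> i) * cmod (c (\<sigma> i)) ^ 4" using of_real_eq_iff by blast
      then show ?thesis using h1 by simp
    qed
    show "\<exists>\<sigma> c. \<sigma> permutes {..<r} \<and>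
             (\<forall>i<r. c i \<noteq> 0 \<and> v (\<sigma> i) = c i *s u i
                    \<and> mu (\<sigma> i) * (cmod (c i)) ^ 4 = lam i)"
      using perm final by (intro exI[of _ \<sigma>] exI[of _ "\<lambda>i. c (\<sigma> i)"]) auto
  qed
  show ?thesis using cps_is_cps rank uniq by blast
qed

end
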